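(* For every integer $m\ge2$ and every $\boldsymbol{a}\in U_{\mathbb{Z}_m}$, the $m$-fold Hurwitz power satisfies $\boldsymbol{a}\star\cdots\star\boldsymbol{a}=\bar{\boldsymbol{1}}=(1,0,0,\dots)$. Consequently, for every prime $p$ and every $n\ge2$, $(U^{(n)}_{\mathbb{Z}_p},\star)$ is an abelian group of order $p^{n-1}$ in which every non-identity element has order $p$, and hence $(U^{(n)}_{\mathbb{Z}_p},\star)\cong(H^{(n-1)}_{\mathbb{Z}_p},+)$.
   Context: For a commutative ring $R$, $H_R$ is the set of sequences in $R$, $H_R^{(n)}$ the set of finite sequences $(a_0,\dots,a_{n-1})$ of length $n$ with componentwise addition, $U_R=\{\boldsymbol a\in H_R:a_0=1\}$ and $U_R^{(n)}$ the length-$n$ sequences with first term $1$. The Hurwitz product is $(\boldsymbol{a}\star\boldsymbol{b})_k=\sum_{h=0}^k\binom{k}{h}a_hb_{k-h}$ (on length-$n$ sequences, computed for $k=0,\dots,n-1$). $\mathbb{Z}_m=\mathbb{Z}/m\mathbb{Z}$. *)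

theory Defs
  imports "Berlekamp_Zassenhaus.Finite_Field" "HOL-Algebra.Multiplicative_Group"
begin

text \<open>Sequences in a commutative ring R are functions nat => R.
  Z_m is modelled by the type 'm mod_ring, where m = CARD('m).\<close>

definition hurwitz_prod :: "(nat \<Rightarrow> 'a::comm_ring_1) \<Rightarrow> (nat \<Rightarrow> 'a) \<Rightarrow> nat \<Rightarrow> 'a" where
  "hurwitz_prod a b = (\<lambda>k. \<Sum>h = 0..k. of_nat (k choose h) * a h * b (k - h))"

definition hurwitz_one :: "nat \<Rightarrow> 'a::comm_ring_1" where
  "hurwitz_one = (\<lambda>k. if k = 0 then 1 else 0)"

definition U_seq :: "(nat \<Rightarrow> 'a::comm_ring_1) set" where
  "U_seq = {a. a 0 = 1}"

primrec hurwitz_pow :: "(nat \<Rightarrow> 'a::comm_ring_1) \<Rightarrow> nat \<Rightarrow> nat \<Rightarrow> 'a" where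
  "hurwitz_pow a 0 = hurwitz_one"
| "hurwitz_pow a (Suc j) = hurwitz_prod a (hurwitz_pow a j)"

text \<open>Length-n sequences (a_0,...,a_{n-1}) are represented canonically as
  sequences vanishing from index n on.\<close>
definition H_fin :: "nat \<Rightarrow> (nat \<Rightarrow> 'a::comm_ring_1) set" where
  "H_fin n = {a. \<forall>k\<ge>n. a k = 0}"

definition U_fin :: "nat \<Rightarrow> (nat \<Rightarrow> 'a::comm_ring_1) set" where
  "U_fin n = {a \<in> H_fin n. a 0 = 1}"

definition hurwitz_prod_fin :: "nat \<Rightarrow> (nat \<Rightarrow> 'a::comm_ring_1) \<Rightarrow> (nat \<Rightarrow> 'a) \<Rightarrow> nat \<Rightarrow> 'a" where
  "hurwitz_prod_fin n a b = (\<lambda>k. if k < n then hurwitz_prod a b k else 0)"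

definition U_group :: "nat \<Rightarrow> (nat \<Rightarrow> 'a::comm_ring_1) monoid" where
  "U_group n = \<lparr>partial_object.carrier = U_fin n, monoid.mult = hurwitz_prod_fin n, monoid.one = hurwitz_one\<rparr>"

definition H_add_group :: "nat \<Rightarrow> (nat \<Rightarrow> 'a::comm_ring_1) monoid" where
  "H_add_group n = \<lparr>partial_object.carrier = H_fin n, monoid.mult = (\<lambda>a b k. a k + b k), monoid.one = (\<lambda>_. 0)\<rparr>"

end

theory Submission
  imports Defs
begin


definition D :: "(nat \<Rightarrow> 'a) \<Rightarrow> nat \<Rightarrow> 'a" where "D a = (\<lambda>k. a (Suc k))"

lemma hp_0[simp]: "hurwitz_prod a b 0 = a 0 * b 0"
  by (simp add: hurwitz_prod_def)

lemma hp_alt: "hurwitz_prod a b k = (\<Sum>h\<le>k. of_nat (k choose h) * a h * b (k - h))"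
  by (simp add: hurwitz_prod_def atLeast0AtMost)

lemma leibniz: "hurwitz_prod a b (Suc k) = hurwitz_prod (D a) b k + hurwitz_prod a (D b) k"
proof -
  have "hurwitz_prod a b (Suc k) = a 0 * b (Suc k) + (\<Sum>h\<le>k. of_nat (Suc k choose Suc h) * a (Suc h) * b (k - h))"
    unfolding hp_alt by (subst sum.atMost_Suc_shift) simp
  also have "(\<Sum>h\<le>k. of_nat (Suc k choose Suc h) * a (Suc h) * b (k - h)) =
     (\<Sum>h\<le>k. of_nat (k choose h) * a (Suc h) * b (k - h)) + (\<Sum>h\<le>k. of_nat (k choose Suc h) * a (Suc h) * b (k - h))"
    by (simp add: sum.distrib algebra_simps)
  also have "(\<Sum>h\<le>k. of_nat (k choose h) * a (Suc h) * b (k - h)) = hurwitz_prod (D a) b k"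
    by (simp add: hp_alt D_def)
  also have "a 0 * b (Suc k) + (hurwitz_prod (D a) b k + (\<Sum>h\<le>k. of_nat (k choose Suc h) * a (Suc h) * b (k - h)))
     = hurwitz_prod (D a) b k + (a 0 * b (Suc k) + (\<Sum>h\<le>k. of_nat (k choose Suc h) * a (Suc h) * b (k - h)))"
    by (simp add: algebra_simps)
  also have "a 0 * b (Suc k) + (\<Sum>h\<le>k. of_nat (k choose Suc h) * a (Suc h) * b (k - h)) = hurwitz_prod a (D b) k"
  proof (cases k)
    case 0 then show ?thesis by (simp add: D_def)
  next
    case (Suc k')
    have "hurwitz_prod a (D b) k = a 0 * b (Suc k) + (\<Sum>h\<le>k'. of_nat (k choose Suc h) * a (Suc h) * b (Suc (k' - h)))"
      unfolding hp_alt D_def Suc by (subst sum.atMost_Suc_shift) simp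
    moreover have "(\<Sum>h\<le>k. of_nat (k choose Suc h) * a (Suc h) * b (k - h)) = (\<Sum>h\<le>k'. of_nat (k choose Suc h) * a (Suc h) * b (Suc (k' - h)))"
      unfolding Suc by (simp add: Suc_diff_le binomial_eq_0 del: binomial_Suc_Suc)
    ultimately show ?thesis by simp
  qed
  finally show ?thesis .
qed

lemma hp_add_right: "hurwitz_prod a (\<lambda>k. f k + g k) k = hurwitz_prod a f k + hurwitz_prod a g k"
  by (simp add: hurwitz_prod_def sum.distrib algebra_simps)
lemma hp_add_left: "hurwitz_prod (\<lambda>k. f k + g k) b k = hurwitz_prod f b k + hurwitz_prod g b k"
  by (simp add: hurwitz_prod_def sum.distrib algebra_simps)
lemma hp_scal_right: "hurwitz_prod a (\<lambda>k. c * f k) k = c * hurwitz_prod a f k"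
  by (simp add: hurwitz_prod_def sum_distrib_left algebra_simps)
lemma hp_zero_right: "hurwitz_prod a (\<lambda>k. 0) k = 0"
  by (simp add: hurwitz_prod_def)

lemma D_hp: "D (hurwitz_prod a b) = (\<lambda>k. hurwitz_prod (D a) b k + hurwitz_prod a (D b) k)"
  by (rule ext) (simp add: D_def leibniz)

lemma hp_comm_pt: "hurwitz_prod a b k = hurwitz_prod b a k"
proof (induction k arbitrary: a b)
  case 0 then show ?case by (simp add: mult.commute)
next
  case (Suc k) then show ?case by (simp add: leibniz add.commute)
qed

lemma hp_comm: "hurwitz_prod a b = hurwitz_prod b a"
  using hp_comm_pt by blast

lemma hp_assoc_pt: "hurwitz_prod a (hurwitz_prod b c) k = hurwitz_prod (hurwitz_prod a b) c k"
proof (induction k arbitrary: a b c)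
  case 0 then show ?case by (simp add: mult.assoc)
next
  case (Suc k)
  show ?case
    by (simp add: leibniz D_hp hp_add_right hp_add_left Suc.IH add.assoc)
qed

lemma hp_assoc: "hurwitz_prod a (hurwitz_prod b c) = hurwitz_prod (hurwitz_prod a b) c"
  using hp_assoc_pt by blast

lemma D_one: "D hurwitz_one = (\<lambda>k. 0)"
  by (rule ext) (simp add: D_def hurwitz_one_def)

lemma D_pow: "D (hurwitz_pow a (Suc j)) k = of_nat (Suc j) * hurwitz_prod (D a) (hurwitz_pow a j) k"
proof (induction j arbitrary: k)
  case 0 then show ?case by (simp add: D_hp D_one hp_zero_right)
next
  case (Suc j)
  have e: "D (hurwitz_pow a (Suc j)) = (\<lambda>k. of_nat (Suc j) * hurwitz_prod (D a) (hurwitz_pow a j) k)"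
    using Suc.IH by blast
  have h: "hurwitz_prod a (hurwitz_prod (D a) (hurwitz_pow a j)) = hurwitz_prod (D a) (hurwitz_pow a (Suc j))"
    by (simp add: hp_assoc hp_comm[of a "D a"])
  have "D (hurwitz_pow a (Suc (Suc j))) k = hurwitz_prod (D a) (hurwitz_pow a (Suc j)) k + hurwitz_prod a (D (hurwitz_pow a (Suc j))) k"
    by (simp only: hurwitz_pow.simps(2)[of a "Suc j"] D_hp)
  also have "\<dots> = hurwitz_prod (D a) (hurwitz_pow a (Suc j)) k + of_nat (Suc j) * hurwitz_prod a (hurwitz_prod (D a) (hurwitz_pow a j)) k"
    by (simp only: e hp_scal_right)
  also have "\<dots> = of_nat (Suc (Suc j)) * hurwitz_prod (D a) (hurwitz_pow a (Suc j)) k"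
    by (simp only: h) (simp add: algebra_simps)
  finally show ?case .
qed

lemma pow_0: "hurwitz_pow a j 0 = a 0 ^ j"
  by (induction j) (simp_all add: hurwitz_one_def)

lemma pow_char:
  fixes a :: "nat \<Rightarrow> 'a::comm_ring_1"
  assumes "of_nat N = (0::'a)" "a 0 = 1"
  shows "hurwitz_pow a N = hurwitz_one"
proof (rule ext)
  fix k show "hurwitz_pow a N k = hurwitz_one k"
  proof (cases k)
    case 0 then show ?thesis by (simp add: pow_0 assms hurwitz_one_def)
  next
    case (Suc k')
    show ?thesis
    proof (cases N)
      case 0 then show ?thesis by simp
    next
      case (Suc j)
      have "hurwitz_pow a N k = D (hurwitz_pow a N) k'" by (simp add: D_def \<open>k = Suc k'\<close>)
      also have "\<dots> = 0" using D_pow[of a j k'] assms(1) Suc by simp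
      finally show ?thesis by (simp add: hurwitz_one_def \<open>k = Suc k'\<close>)
    qed
  qed
qed




definition Tr :: "nat \<Rightarrow> (nat \<Rightarrow> 'a::comm_ring_1) \<Rightarrow> nat \<Rightarrow> 'a" where
  "Tr n x = (\<lambda>k. if k < n then x k else 0)"

lemma Tr_apply: "Tr n x k = (if k < n then x k else 0)"
  by (simp add: Tr_def)

lemma Tr_one: "0 < n \<Longrightarrow> Tr n hurwitz_one = hurwitz_one"
  by (rule ext) (simp add: Tr_apply hurwitz_one_def)

lemma hpf_Tr: "hurwitz_prod_fin n a b = Tr n (hurwitz_prod a b)"
  by (simp add: hurwitz_prod_fin_def Tr_def)

lemma hp_Tr_left: "k < n \<Longrightarrow> hurwitz_prod (Tr n a) b k = hurwitz_prod a b k"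
  unfolding hurwitz_prod_def Tr_def by (intro sum.cong) auto

lemma hp_Tr_right: "k < n \<Longrightarrow> hurwitz_prod a (Tr n b) k = hurwitz_prod a b k"
  using hp_Tr_left[of k n b a] hp_comm_pt by metis

lemma hp_one_left: "hurwitz_prod hurwitz_one x = x"
proof (rule ext)
  fix k
  have "hurwitz_prod hurwitz_one x k = (\<Sum>h\<le>k. if h = 0 then x k else 0)"
    unfolding hp_alt hurwitz_one_def by (intro sum.cong) auto
  also have "\<dots> = x k" by (simp add: sum.delta)
  finally show "hurwitz_prod hurwitz_one x k = x k" .
qed

lemma U_group_simps[simp]: "carrier (U_group n) = U_fin n" "monoid.mult (U_group n) = hurwitz_prod_fin n"
  "one (U_group n) = hurwitz_one"
  by (simp_all add: U_group_def)

lemma H_add_simps[simp]: "carrier (H_add_group n) = H_fin n" "monoid.mult (H_add_group n) = (\<lambda>a b k. a k + b k)"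
  "one (H_add_group n) = (\<lambda>_. 0)"
  by (simp_all add: H_add_group_def)

lemma one_U: "0 < n \<Longrightarrow> hurwitz_one \<in> U_fin n"
  by (simp add: U_fin_def H_fin_def hurwitz_one_def)

lemma Tr_U: "0 < n \<Longrightarrow> x 0 = 1 \<Longrightarrow> Tr n x \<in> U_fin n"
  by (simp add: U_fin_def H_fin_def Tr_def)

lemma Tr_id: "x \<in> U_fin n \<Longrightarrow> Tr n x = x"
  by (auto simp: U_fin_def H_fin_def Tr_def)

lemma hpf_closed: "0 < n \<Longrightarrow> a \<in> U_fin n \<Longrightarrow> b \<in> U_fin n \<Longrightarrow> hurwitz_prod_fin n a b \<in> U_fin n"
  unfolding hpf_Tr by (rule Tr_U) (auto simp: U_fin_def)

lemma hpf_assoc: "hurwitz_prod_fin n (hurwitz_prod_fin n a b) c = hurwitz_prod_fin n a (hurwitz_prod_fin n b c)"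
  unfolding hpf_Tr by (rule ext) (simp add: Tr_apply hp_Tr_left hp_Tr_right hp_assoc_pt)

lemma hpf_comm: "hurwitz_prod_fin n a b = hurwitz_prod_fin n b a"
  unfolding hpf_Tr by (simp add: hp_comm)

lemma hpf_one: "x \<in> U_fin n \<Longrightarrow> hurwitz_prod_fin n hurwitz_one x = x"
  unfolding hpf_Tr hp_one_left by (rule Tr_id)

lemma U_pow: "0 < n \<Longrightarrow> x \<in> U_fin n \<Longrightarrow> x [^]\<^bsub>U_group n\<^esub> m = Tr n (hurwitz_pow x m)"
proof (induction m)
  case 0 then show ?case by (simp add: Tr_one)
next
  case (Suc m)
  have "x [^]\<^bsub>U_group n\<^esub> Suc m = hurwitz_prod_fin n (Tr n (hurwitz_pow x m)) x"
    using Suc by simp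
  also have "\<dots> = Tr n (hurwitz_pow x (Suc m))"
    unfolding hpf_Tr by (rule ext) (simp add: Tr_apply hp_Tr_right hp_comm)
  finally show ?case .
qed

lemma U_group_comm: "0 < n \<Longrightarrow> x [^]\<^bsub>U_group n\<^esub> CARD('p) = hurwitz_one" if "x \<in> U_fin n" for x :: "nat \<Rightarrow> 'p::nontriv mod_ring"
proof -
  assume n: "0 < n"
  have "hurwitz_pow x CARD('p) = hurwitz_one"
    by (rule pow_char) (use that in \<open>auto simp: U_fin_def\<close>)
  then show ?thesis using U_pow[OF n that] Tr_one[OF n] by simp
qed

lemma U_comm_group:
  assumes n: "0 < n"
  shows "comm_group (U_group n :: (nat \<Rightarrow> 'p::nontriv mod_ring) monoid)"
proof (rule comm_groupI)
  fix x :: "nat \<Rightarrow> 'p mod_ring" assume x: "x \<in> carrier (U_group n)"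
  show "\<exists>y\<in>carrier (U_group n). y \<otimes>\<^bsub>U_group n\<^esub> x = \<one>\<^bsub>U_group n\<^esub>"
  proof (intro bexI)
    have "x [^]\<^bsub>U_group n\<^esub> (CARD('p) - 1) \<otimes>\<^bsub>U_group n\<^esub> x = x [^]\<^bsub>U_group n\<^esub> CARD('p)"
      using nontriv[where 'a='p] by (metis Suc_diff_1 less_trans nat_pow_Suc zero_less_one)
    then show "x [^]\<^bsub>U_group n\<^esub> (CARD('p) - 1) \<otimes>\<^bsub>U_group n\<^esub> x = \<one>\<^bsub>U_group n\<^esub>"
      using U_group_comm[of x n] x n by simp
    show "x [^]\<^bsub>U_group n\<^esub> (CARD('p) - 1) \<in> carrier (U_group n)"
      using U_pow[OF n, of x] x n Tr_U[OF n, of "hurwitz_pow x (CARD('p) - 1)"] by (simp add: pow_0 U_fin_def)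
  qed
qed (use n in \<open>auto simp: hpf_closed one_U hpf_assoc hpf_one intro: hpf_comm\<close>)


lemma card_U:
  assumes n: "0 < n"
  shows "card (U_fin n :: (nat \<Rightarrow> 'a::{finite,comm_ring_1}) set) = CARD('a) ^ (n - 1)"
proof -
  let ?f = "\<lambda>a::nat \<Rightarrow> 'a. restrict a {1..<n}"
  let ?g = "\<lambda>f::nat \<Rightarrow> 'a. \<lambda>k. if k = 0 then 1 else if k < n then f k else 0"
  have "bij_betw ?f (U_fin n) ({1..<n} \<rightarrow>\<^sub>E (UNIV :: 'a set))"
  proof (rule bij_betw_byWitness[where f' = ?g])
    show "\<forall>a\<in>U_fin n. ?g (?f a) = a"
      by (auto simp: U_fin_def H_fin_def fun_eq_iff)
    show "\<forall>a'\<in>{1..<n} \<rightarrow>\<^sub>E UNIV. ?f (?g a') = a'"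
      by (auto simp: fun_eq_iff PiE_def extensional_def)
    show "?f ` U_fin n \<subseteq> {1..<n} \<rightarrow>\<^sub>E UNIV" by (auto simp: restrict_PiE_iff)
    show "?g ` ({1..<n} \<rightarrow>\<^sub>E UNIV) \<subseteq> U_fin n"
      using n by (auto simp: U_fin_def H_fin_def)
  qed
  then have "card (U_fin n :: (nat \<Rightarrow> 'a) set) = card ({1..<n} \<rightarrow>\<^sub>E (UNIV :: 'a set))"
    by (rule bij_betw_same_card)
  also have "\<dots> = CARD('a) ^ (n - 1)"
    by (simp add: card_PiE)
  finally show ?thesis .
qed

lemma card_H:
  "card (H_fin m :: (nat \<Rightarrow> 'a::{finite,comm_ring_1}) set) = CARD('a) ^ m"
proof -
  let ?f = "\<lambda>a::nat \<Rightarrow> 'a. restrict a {..<m}"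
  let ?g = "\<lambda>f::nat \<Rightarrow> 'a. \<lambda>k. if k < m then f k else 0"
  have "bij_betw ?f (H_fin m) ({..<m} \<rightarrow>\<^sub>E (UNIV :: 'a set))"
  proof (rule bij_betw_byWitness[where f' = ?g])
    show "\<forall>a\<in>H_fin m. ?g (?f a) = a"
    proof
      fix a :: "nat \<Rightarrow> 'a" assume a: "a \<in> H_fin m"
      show "?g (?f a) = a"
      proof (rule ext)
        fix k show "?g (?f a) k = a k" using a by (cases "k < m") (auto simp: H_fin_def)
      qed
    qed
    show "\<forall>a'\<in>{..<m} \<rightarrow>\<^sub>E UNIV. ?f (?g a') = a'"
    proof
      fix a' :: "nat \<Rightarrow> 'a" assume a: "a' \<in> {..<m} \<rightarrow>\<^sub>E UNIV"
      show "?f (?g a') = a'"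
      proof (rule ext)
        fix k show "?f (?g a') k = a' k" using a by (cases "k < m") (auto simp: PiE_def extensional_def)
      qed
    qed
    show "?f ` H_fin m \<subseteq> {..<m} \<rightarrow>\<^sub>E UNIV" by (rule image_subsetI, subst restrict_PiE_iff) blast
    show "?g ` ({..<m} \<rightarrow>\<^sub>E UNIV) \<subseteq> H_fin m"
      unfolding H_fin_def by (rule image_subsetI) simp
  qed
  then have "card (H_fin m :: (nat \<Rightarrow> 'a) set) = card ({..<m} \<rightarrow>\<^sub>E (UNIV :: 'a set))"
    by (rule bij_betw_same_card)
  also have "\<dots> = CARD('a) ^ m"
    by (simp add: card_PiE)
  finally show ?thesis .
qed

lemma finite_U: "finite (U_fin n :: (nat \<Rightarrow> 'a::{finite,comm_ring_1}) set)" if "0 < n"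
proof (rule ccontr)
  assume "infinite (U_fin n :: (nat \<Rightarrow> 'a) set)"
  then have "card (U_fin n :: (nat \<Rightarrow> 'a) set) = 0" by simp
  moreover have "CARD('a) ^ (n - 1) > 0" by simp
  ultimately show False using card_U[OF that, where 'a='a] by simp
qed

lemma finite_H: "finite (H_fin m :: (nat \<Rightarrow> 'a::{finite,comm_ring_1}) set)"
proof (rule ccontr)
  assume "infinite (H_fin m :: (nat \<Rightarrow> 'a) set)"
  then have "card (H_fin m :: (nat \<Rightarrow> 'a) set) = 0" by simp
  moreover have "CARD('a) ^ m > 0" by simp
  ultimately show False using card_H[of m, where 'a='a] by simp
qed

lemma L_add:
  assumes "x 0 = 1" "y 0 = 1" "0 < k" "\<And>h. 0 < h \<Longrightarrow> h < k \<Longrightarrow> x h = 0"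
  shows "hurwitz_prod x y k = x k + y k"
proof -
  have e: "{..k} = insert 0 (insert k {1..<k})" using assms(3) by auto
  have z: "(\<Sum>h\<in>{1..<k}. of_nat (k choose h) * x h * y (k - h)) = 0"
    by (rule sum.neutral) (auto simp: assms(4))
  show ?thesis unfolding hp_alt e using assms(1,2,3) z by (simp add: add.commute)
qed

definition low :: "nat \<Rightarrow> nat \<Rightarrow> (nat \<Rightarrow> 'a::comm_ring_1) \<Rightarrow> bool" where
  "low n s x \<longleftrightarrow> x \<in> U_fin n \<and> (\<forall>h. 0 < h \<and> h < s \<longrightarrow> x h = 0)"

lemma low_mono: "low n s x \<Longrightarrow> t \<le> s \<Longrightarrow> low n t x"
  by (auto simp: low_def)

lemma low_mult:
  assumes n: "0 < n" and s: "0 < s" and x: "low n s x" and y: "low n s y"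
  shows "low n s (hurwitz_prod_fin n x y) \<and> hurwitz_prod_fin n x y s = x s + y s"
proof -
  have x0: "x 0 = 1" and y0: "y 0 = 1" using x y by (auto simp: low_def U_fin_def)
  have key: "hurwitz_prod_fin n x y k = x k + y k" if "0 < k" "k \<le> s" for k
  proof (cases "k < n")
    case True
    then show ?thesis using L_add[of x y k] x0 y0 that x by (auto simp: hpf_Tr Tr_apply low_def)
  next
    case False
    then show ?thesis using x y by (auto simp: hpf_Tr Tr_apply low_def U_fin_def H_fin_def)
  qed
  show ?thesis
    using key[of s] s hpf_closed[OF n, of x y] x y key by (auto simp: low_def)
qed

lemma low_one: "0 < n \<Longrightarrow> low n s hurwitz_one"
  unfolding low_def using one_U[of n] by (auto simp: hurwitz_one_def)

lemma low_pow:
  fixes x :: "nat \<Rightarrow> 'a::comm_ring_1"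
  assumes n: "0 < n" and s: "0 < s" and x: "low n s x"
  shows "low n s (x [^]\<^bsub>U_group n\<^esub> m) \<and> (x [^]\<^bsub>U_group n\<^esub> m) s = of_nat m * x s"
proof (induction m)
  case 0
  have "hurwitz_one s = (0::'a)" using s by (simp add: hurwitz_one_def)
  then show ?case using low_one[OF n, of s] by simp
next
  case (Suc m)
  then show ?case using low_mult[OF n s _ x, of "x [^]\<^bsub>U_group n\<^esub> m"] by (simp add: algebra_simps)
qed

definition e :: "nat \<Rightarrow> nat \<Rightarrow> 'a::comm_ring_1" where
  "e i = (\<lambda>k. if k = 0 then 1 else if k = Suc i then 1 else 0)"

lemma low_e: "Suc i < n \<Longrightarrow> low n (Suc i) (e i)"
  by (auto simp: low_def e_def U_fin_def H_fin_def)

definition val :: "'a::nontriv mod_ring \<Rightarrow> nat" where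
  "val x = nat (to_int_mod_ring x)"

lemma val_props: "of_nat (val x) = x" "val x < CARD('a)" for x :: "'a::nontriv mod_ring"
proof -
  have r: "to_int_mod_ring x \<in> {0..<int CARD('a)}" using range_to_int_mod_ring[where 'a='a] by blast
  then show "val x < CARD('a)" by (auto simp: val_def)
  have "of_nat (val x) = (of_int (to_int_mod_ring x) :: 'a mod_ring)"
    using r by (simp add: val_def)
  also have "\<dots> = x" by (simp add: of_int_of_int_mod_ring)
  finally show "of_nat (val x) = x" .
qed

primrec Pm :: "nat \<Rightarrow> nat \<Rightarrow> (nat \<Rightarrow> 'a::nontriv mod_ring) \<Rightarrow> nat \<Rightarrow> 'a mod_ring" where
  "Pm n 0 c = hurwitz_one"
| "Pm n (Suc i) c = hurwitz_prod_fin n (Pm n i c) ((e i) [^]\<^bsub>U_group n\<^esub> (val (c i)))"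


lemma e_U: "Suc i < n \<Longrightarrow> e i \<in> U_fin n"
  using low_e by (auto simp: low_def)

lemma pow_mod_p:
  fixes g :: "nat \<Rightarrow> 'p::nontriv mod_ring"
  assumes n: "0 < n" and g: "g \<in> U_fin n"
  shows "g [^]\<^bsub>U_group n\<^esub> k = g [^]\<^bsub>U_group n\<^esub> (k mod CARD('p))"
proof -
  interpret G: comm_group "U_group n :: (nat \<Rightarrow> 'p mod_ring) monoid" by (rule U_comm_group[OF n])
  have gc: "g \<in> carrier (U_group n)" using g by simp
  have "g [^]\<^bsub>U_group n\<^esub> k = g [^]\<^bsub>U_group n\<^esub> (CARD('p) * (k div CARD('p)) + k mod CARD('p))"
    by simp
  also have "\<dots> = g [^]\<^bsub>U_group n\<^esub> (CARD('p) * (k div CARD('p))) \<otimes>\<^bsub>U_group n\<^esub> g [^]\<^bsub>U_group n\<^esub> (k mod CARD('p))"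
    by (rule G.nat_pow_mult[OF gc, symmetric])
  also have "g [^]\<^bsub>U_group n\<^esub> (CARD('p) * (k div CARD('p))) = (g [^]\<^bsub>U_group n\<^esub> CARD('p)) [^]\<^bsub>U_group n\<^esub> (k div CARD('p))"
    by (rule G.nat_pow_pow[OF gc, symmetric])
  also have "(g [^]\<^bsub>U_group n\<^esub> CARD('p)) = \<one>\<^bsub>U_group n\<^esub>"
    using U_group_comm[OF g n] by simp
  also have "\<one>\<^bsub>U_group n\<^esub> [^]\<^bsub>U_group n\<^esub> (k div CARD('p)) \<otimes>\<^bsub>U_group n\<^esub> g [^]\<^bsub>U_group n\<^esub> (k mod CARD('p)) = g [^]\<^bsub>U_group n\<^esub> (k mod CARD('p))"
    using gc by (simp only: G.nat_pow_one G.l_one G.nat_pow_closed)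
  finally show ?thesis .
qed

lemma pow_val_add:
  fixes g :: "nat \<Rightarrow> 'p::nontriv mod_ring" and a b :: "'p mod_ring"
  assumes n: "0 < n" and g: "g \<in> U_fin n"
  shows "g [^]\<^bsub>U_group n\<^esub> val (a + b) = hurwitz_prod_fin n (g [^]\<^bsub>U_group n\<^esub> val a) (g [^]\<^bsub>U_group n\<^esub> val b)"
proof -
  interpret G: comm_group "U_group n :: (nat \<Rightarrow> 'p mod_ring) monoid" by (rule U_comm_group[OF n])
  have gc: "g \<in> carrier (U_group n)" using g by simp
  have "(of_nat (val (a + b)) :: 'p mod_ring) = of_nat (val a + val b)"
    unfolding of_nat_add val_props(1) ..
  then have "val (a + b) mod CARD('p) = (val a + val b) mod CARD('p)"
    using of_nat_eq_iff_cong_CHAR[of "val (a + b)" "val a + val b", where 'a="'p mod_ring"] by (simp add: cong_def)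
  then have "g [^]\<^bsub>U_group n\<^esub> val (a + b) = g [^]\<^bsub>U_group n\<^esub> (val a + val b)"
    using pow_mod_p[OF n g] by metis
  also have "\<dots> = g [^]\<^bsub>U_group n\<^esub> val a \<otimes>\<^bsub>U_group n\<^esub> g [^]\<^bsub>U_group n\<^esub> val b"
    using gc by (simp add: G.nat_pow_mult[symmetric])
  finally show ?thesis by simp
qed

lemma Pm_closed:
  fixes c :: "nat \<Rightarrow> 'p::nontriv mod_ring"
  assumes n: "0 < n" and i: "i \<le> n - 1"
  shows "Pm n i c \<in> U_fin n"
  using i
proof (induction i)
  case 0 then show ?case using one_U[OF n] by simp
next
  case (Suc i)
  interpret G: comm_group "U_group n :: (nat \<Rightarrow> 'p mod_ring) monoid" by (rule U_comm_group[OF n])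
  have "Suc i < n" using Suc.prems n by linarith
  then have "(e i :: nat \<Rightarrow> 'p mod_ring) \<in> carrier (U_group n)" using e_U[of i n] by simp
  then have "(e i :: nat \<Rightarrow> 'p mod_ring) [^]\<^bsub>U_group n\<^esub> (val (c i)) \<in> U_fin n" using G.nat_pow_closed[of "e i" "val (c i)"] by simp
  then show ?case using Suc hpf_closed[OF n] by simp
qed

lemma Pm_hom:
  fixes c c' :: "nat \<Rightarrow> 'p::nontriv mod_ring"
  assumes n: "0 < n" and i: "i \<le> n - 1"
  shows "Pm n i (\<lambda>k. c k + c' k) = hurwitz_prod_fin n (Pm n i c) (Pm n i c')"
  using i
proof (induction i)
  case 0 then show ?case using hpf_one[OF one_U[OF n, where 'a="'p mod_ring"]] by simp
next
  case (Suc i)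
  interpret G: comm_group "U_group n :: (nat \<Rightarrow> 'p mod_ring) monoid" by (rule U_comm_group[OF n])
  have "Suc i < n" using Suc.prems n by linarith
  then have ei: "(e i :: nat \<Rightarrow> 'p mod_ring) \<in> U_fin n" using e_U[of i n] by simp
  have A: "Pm n i c \<in> carrier (U_group n)" "Pm n i c' \<in> carrier (U_group n)"
    using Pm_closed[OF n, of i] Suc.prems by auto
  have B: "(e i :: nat \<Rightarrow> 'p mod_ring) [^]\<^bsub>U_group n\<^esub> (v::nat) \<in> carrier (U_group n)" for v
    using ei G.nat_pow_closed[of "e i" v] by simp
  have "Pm n (Suc i) (\<lambda>k. c k + c' k) =
     (Pm n i c \<otimes>\<^bsub>U_group n\<^esub> Pm n i c') \<otimes>\<^bsub>U_group n\<^esub>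
     ((e i :: nat \<Rightarrow> 'p mod_ring) [^]\<^bsub>U_group n\<^esub> val (c i) \<otimes>\<^bsub>U_group n\<^esub> (e i :: nat \<Rightarrow> 'p mod_ring) [^]\<^bsub>U_group n\<^esub> val (c' i))"
    using Suc pow_val_add[OF n ei, of "c i" "c' i"] by simp
  also have "\<dots> = (Pm n i c \<otimes>\<^bsub>U_group n\<^esub> (e i :: nat \<Rightarrow> 'p mod_ring) [^]\<^bsub>U_group n\<^esub> val (c i)) \<otimes>\<^bsub>U_group n\<^esub>
     (Pm n i c' \<otimes>\<^bsub>U_group n\<^esub> (e i :: nat \<Rightarrow> 'p mod_ring) [^]\<^bsub>U_group n\<^esub> val (c' i))"
    using A B by (simp del: U_group_simps add: G.m_ac)
  finally show ?case by simp
qed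

lemma Pm_low:
  fixes c :: "nat \<Rightarrow> 'p::nontriv mod_ring"
  assumes n: "0 < n" and s: "s < n - 1" and c0: "\<And>j. j < s \<Longrightarrow> c j = 0"
  shows "i \<le> n - 1 \<Longrightarrow> low n (Suc s) (Pm n i c) \<and> Pm n i c (Suc s) = (if s < i then c s else 0)"
proof (induction i)
  case 0 then show ?case using low_one[OF n, of "Suc s"] by (simp add: hurwitz_one_def)
next
  case (Suc i)
  interpret G: comm_group "U_group n :: (nat \<Rightarrow> 'p mod_ring) monoid" by (rule U_comm_group[OF n])
  have IH: "low n (Suc s) (Pm n i c)" "Pm n i c (Suc s) = (if s < i then c s else 0)" using Suc by auto
  let ?y = "(e i :: nat \<Rightarrow> 'p mod_ring) [^]\<^bsub>U_group n\<^esub> val (c i)"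
  have y: "low n (Suc s) ?y \<and> ?y (Suc s) = (if i = s then c s else 0)"
  proof (cases "i < s")
    case True
    then have "?y = hurwitz_one" using c0[of i] by (simp add: val_def)
    moreover have "hurwitz_one (Suc s) = (0::'p mod_ring)" by (simp add: hurwitz_one_def)
    ultimately show ?thesis using True low_one[OF n, of "Suc s"] by simp
  next
    case False
    have "Suc i < n" using Suc.prems n by linarith
    then have le: "low n (Suc i) (e i :: nat \<Rightarrow> 'p mod_ring)" using low_e[of i n] by simp
    have p: "low n (Suc i) ?y \<and> ?y (Suc i) = of_nat (val (c i)) * e i (Suc i)"
      by (rule low_pow[OF n _ le]) simp
    show ?thesis
    proof (cases "i = s")
      case True
      then show ?thesis using p by (simp add: val_props e_def)
    next
      case F2: False
      with False have "s < i" by simp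
      then show ?thesis using p low_mono[of n "Suc i" ?y "Suc s"] by (auto simp: low_def)
    qed
  qed
  have "low n (Suc s) (hurwitz_prod_fin n (Pm n i c) ?y) \<and> hurwitz_prod_fin n (Pm n i c) ?y (Suc s) = Pm n i c (Suc s) + ?y (Suc s)"
    by (rule low_mult[OF n _ IH(1)]) (use y in simp_all)
  then show ?case using IH(2) y by auto
qed

lemma Pm_kernel:
  fixes c :: "nat \<Rightarrow> 'p::nontriv mod_ring"
  assumes n: "0 < n" and c: "c \<in> H_fin (n - 1)" and P: "Pm n (n - 1) c = hurwitz_one"
  shows "c = (\<lambda>_. 0)"
proof (rule ccontr)
  assume "c \<noteq> (\<lambda>_. 0)"
  then obtain j where j: "c j \<noteq> 0" by auto
  define s where "s = (LEAST j. c j \<noteq> 0)"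
  have cs: "c s \<noteq> 0" unfolding s_def by (rule LeastI[of _ j]) (rule j)
  have c0: "\<And>j. j < s \<Longrightarrow> c j = 0" unfolding s_def using not_less_Least by blast
  have sn: "s < n - 1" using c cs by (auto simp: H_fin_def not_less[symmetric])
  have "Pm n (n - 1) c (Suc s) = c s" using Pm_low[OF n sn c0, where i="n - 1"] sn by simp
  then show False using P cs by (simp add: hurwitz_one_def)
qed

lemma H_group: "group (H_add_group m :: (nat \<Rightarrow> 'a::comm_ring_1) monoid)"
proof (rule groupI)
  fix x :: "nat \<Rightarrow> 'a" assume x: "x \<in> carrier (H_add_group m)"
  show "\<exists>y\<in>carrier (H_add_group m). y \<otimes>\<^bsub>H_add_group m\<^esub> x = \<one>\<^bsub>H_add_group m\<^esub>"
    by (rule bexI[of _ "\<lambda>k. - x k"]) (use x in \<open>auto simp: H_fin_def\<close>)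
qed (auto simp: H_fin_def add.assoc)

lemma Phi_iso:
  assumes n: "0 < n"
  shows "Pm n (n - 1) \<in> Group.iso (H_add_group (n - 1)) (U_group n :: (nat \<Rightarrow> 'p::nontriv mod_ring) monoid)"
proof -
  interpret G: comm_group "U_group n :: (nat \<Rightarrow> 'p mod_ring) monoid" by (rule U_comm_group[OF n])
  let ?P = "Pm n (n - 1) :: (nat \<Rightarrow> 'p mod_ring) \<Rightarrow> _"
  have cl: "?P c \<in> U_fin n" for c using Pm_closed[OF n, of "n - 1"] by simp
  have hom: "?P \<in> hom (H_add_group (n - 1)) (U_group n)"
  proof (rule homI)
    fix x :: "nat \<Rightarrow> 'p mod_ring" assume "x \<in> carrier (H_add_group (n - 1))"
    show "?P x \<in> carrier (U_group n)" using cl[of x] by simp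
  next
    fix x y :: "nat \<Rightarrow> 'p mod_ring" assume "x \<in> carrier (H_add_group (n - 1))" "y \<in> carrier (H_add_group (n - 1))"
    show "?P (x \<otimes>\<^bsub>H_add_group (n - 1)\<^esub> y) = ?P x \<otimes>\<^bsub>U_group n\<^esub> ?P y"
      using Pm_hom[OF n, of "n - 1" x y] by simp
  qed
  have inj: "inj_on ?P (H_fin (n - 1))"
  proof (rule inj_onI)
    fix c c' :: "nat \<Rightarrow> 'p mod_ring"
    assume c: "c \<in> H_fin (n - 1)" and c': "c' \<in> H_fin (n - 1)" and eq: "?P c = ?P c'"
    define d where "d = (\<lambda>k. c k - c' k)"
    have d: "d \<in> H_fin (n - 1)" using c c' by (simp add: H_fin_def d_def)
    have "(\<lambda>k. d k + c' k) = c" by (simp add: d_def)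
    then have "?P c = hurwitz_prod_fin n (?P d) (?P c')" using Pm_hom[OF n, of "n - 1" d c'] by simp
    then have "?P d \<otimes>\<^bsub>U_group n\<^esub> ?P c' = ?P c'" using eq by simp
    then have "?P d = \<one>\<^bsub>U_group n\<^esub>"
      using G.r_cancel_one[of "?P c'" "?P d"] cl by simp
    then have "d = (\<lambda>_. 0)" using Pm_kernel[OF n d] by simp
    then show "c = c'" by (auto simp: d_def fun_eq_iff)
  qed
  have img: "?P ` H_fin (n - 1) = U_fin n"
  proof (rule card_subset_eq)
    show "finite (U_fin n :: (nat \<Rightarrow> 'p mod_ring) set)" by (rule finite_U[OF n])
    show "?P ` H_fin (n - 1) \<subseteq> U_fin n" using cl by auto
    show "card (?P ` H_fin (n - 1)) = card (U_fin n :: (nat \<Rightarrow> 'p mod_ring) set)"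
      using card_image[OF inj] card_H[of "n - 1", where 'a="'p mod_ring"] card_U[OF n, where 'a="'p mod_ring"] by simp
  qed
  show ?thesis unfolding Group.iso_def using hom inj img by (simp add: bij_betw_def)
qed

theorem mainTheorem7:
  shows "(\<forall>a :: nat \<Rightarrow> 'm::nontriv mod_ring. a \<in> U_seq \<longrightarrow>
            hurwitz_pow a CARD('m) = hurwitz_one)
       \<and> (\<forall>n::nat. n \<ge> 2 \<longrightarrow>
            comm_group (U_group n :: (nat \<Rightarrow> 'p::prime_card mod_ring) monoid)
          \<and> Coset.order (U_group n :: (nat \<Rightarrow> 'p mod_ring) monoid) = CARD('p) ^ (n - 1)
          \<and> (\<forall>x \<in> carrier (U_group n :: (nat \<Rightarrow> 'p mod_ring) monoid).
               x \<noteq> \<one>\<^bsub>U_group n :: (nat \<Rightarrow> 'p mod_ring) monoid\<^esub> \<longrightarrow>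
               group.ord (U_group n :: (nat \<Rightarrow> 'p mod_ring) monoid) x = CARD('p))
          \<and> (U_group n :: (nat \<Rightarrow> 'p mod_ring) monoid) \<cong>
              (H_add_group (n - 1) :: (nat \<Rightarrow> 'p mod_ring) monoid))"
proof (intro conjI allI impI)
  fix a :: "nat \<Rightarrow> 'm::nontriv mod_ring"
  assume "a \<in> U_seq"
  then show "hurwitz_pow a CARD('m) = hurwitz_one"
    by (intro pow_char) (auto simp: U_seq_def)
next
  fix n :: nat assume n2: "n \<ge> 2"
  then have n: "0 < n" by simp
  interpret G: comm_group "U_group n :: (nat \<Rightarrow> 'p mod_ring) monoid" by (rule U_comm_group[OF n])
  show "comm_group (U_group n :: (nat \<Rightarrow> 'p::prime_card mod_ring) monoid)" by (rule U_comm_group[OF n])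
  show "Coset.order (U_group n :: (nat \<Rightarrow> 'p mod_ring) monoid) = CARD('p) ^ (n - 1)"
    unfolding Coset.order_def U_group_simps(1) using card_U[OF n, where 'a="'p mod_ring"] by (simp only: CARD_mod_ring)
  show "\<forall>x \<in> carrier (U_group n :: (nat \<Rightarrow> 'p mod_ring) monoid).
               x \<noteq> \<one>\<^bsub>U_group n :: (nat \<Rightarrow> 'p mod_ring) monoid\<^esub> \<longrightarrow>
               group.ord (U_group n :: (nat \<Rightarrow> 'p mod_ring) monoid) x = CARD('p)"
  proof (intro ballI impI)
    fix x :: "nat \<Rightarrow> 'p mod_ring"
    assume x: "x \<in> carrier (U_group n)" and x1: "x \<noteq> \<one>\<^bsub>U_group n\<^esub>"
    have "x [^]\<^bsub>U_group n\<^esub> CARD('p) = \<one>\<^bsub>U_group n\<^esub>" using U_group_comm[of x n] x n by simp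
    then have "G.ord x dvd CARD('p)" using G.pow_eq_id[OF x] by simp
    then have "G.ord x = 1 \<or> G.ord x = CARD('p)" using prime_card[where 'a='p] by (simp add: prime_nat_iff)
    then show "G.ord x = CARD('p)" using G.ord_eq_1[OF x] x1 by auto
  qed
  have "(H_add_group (n - 1) :: (nat \<Rightarrow> 'p mod_ring) monoid) \<cong> (U_group n :: (nat \<Rightarrow> 'p mod_ring) monoid)"
    by (rule is_isoI[OF Phi_iso[OF n]])
  then show "(U_group n :: (nat \<Rightarrow> 'p mod_ring) monoid) \<cong> (H_add_group (n - 1) :: (nat \<Rightarrow> 'p mod_ring) monoid)"
    by (rule group.iso_sym[OF H_group])
qed

end
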